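(* Let $s,k\geq 2$. Then the circular graph $G(ks+1,k)=\operatorname{Cay}(\mathbb{Z}_{ks+1},\{k,k+1,\ldots,ks+1-k\})$ is isomorphic to the $s$-stable Kneser graph $\operatorname{KG}(ks+1,k)_{s-\operatorname{stab}}$.
   Context: For integers $s,k\geq 2$ and $n\geq ks$, a subset $S\subseteq[n]=\{1,\dots,n\}$ is $s$-stable if $s\leq |i-j|\leq n-s$ for all distinct $i,j\in S$. The $s$-stable Kneser graph $\operatorname{KG}(n,k)_{s-\operatorname{stab}}$ has as vertices the $s$-stable $k$-subsets of $[n]$, two vertices being adjacent iff they are disjoint. For a group $A$ and a subset $S\subseteq A$ closed under inverses and not containing the identity, the Cayley graph $\operatorname{Cay}(A,S)$ has vertex set $A$, with $u,v$ adjacent iff $u^{-1}v\in S$ (for the cyclic group $\mathbb{Z}_n$, iff $v-u\in S$). For $n\geq 2k$, the circular graph $G(n,k)$ is $\operatorname{Cay}(\mathbb{Z}_n,\{k,k+1,\ldots,n-k\})$. *)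

theory Defs
  imports Main
begin

definition graph_iso ::
  "'a set \<Rightarrow> ('a \<Rightarrow> 'a \<Rightarrow> bool) \<Rightarrow> 'b set \<Rightarrow> ('b \<Rightarrow> 'b \<Rightarrow> bool) \<Rightarrow> bool" where
  "graph_iso V1 E1 V2 E2 \<longleftrightarrow>
     (\<exists>f. bij_betw f V1 V2 \<and> (\<forall>u\<in>V1. \<forall>v\<in>V1. E1 u v \<longleftrightarrow> E2 (f u) (f v)))"

definition cay_Zn_vertices :: "nat \<Rightarrow> int set" where
  "cay_Zn_vertices n = {0..<int n}"

definition cay_Zn_adj :: "nat \<Rightarrow> int set \<Rightarrow> int \<Rightarrow> int \<Rightarrow> bool" where
  "cay_Zn_adj n S u v \<longleftrightarrow> (v - u) mod int n \<in> S"

definition circ_conn :: "nat \<Rightarrow> nat \<Rightarrow> int set" where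
  "circ_conn n k = {int k..int n - int k}"

definition s_stable :: "nat \<Rightarrow> nat \<Rightarrow> nat set \<Rightarrow> bool" where
  "s_stable n s S \<longleftrightarrow> S \<subseteq> {1..n} \<and>
     (\<forall>i\<in>S. \<forall>j\<in>S. i \<noteq> j \<longrightarrow>
        int s \<le> \<bar>int i - int j\<bar> \<and> \<bar>int i - int j\<bar> \<le> int n - int s)"

definition stab_kneser_vertices :: "nat \<Rightarrow> nat \<Rightarrow> nat \<Rightarrow> nat set set" where
  "stab_kneser_vertices n k s = {S. s_stable n s S \<and> card S = k}"

definition kneser_adj :: "nat set \<Rightarrow> nat set \<Rightarrow> bool" where
  "kneser_adj A B \<longleftrightarrow> A \<inter> B = {}"

end

theory Submission
  imports Defs
begin

definition FF' :: "nat \<Rightarrow> int \<Rightarrow> int \<Rightarrow> nat set" where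
 "FF' k N u = {x. 1 \<le> int x \<and> int x \<le> N \<and> (u - int k * int x) mod N < int k}"

definition zz :: "int \<Rightarrow> nat \<Rightarrow> int \<Rightarrow> nat" where
 "zz N s u = nat ((- int s * u - 1) mod N + 1)"

lemma mod_small_neg: "(-n::int) \<le> a \<Longrightarrow> a < 0 \<Longrightarrow> a mod n = a + n"
proof -
  assume a: "-n \<le> a" "a < 0"
  have "a mod n = (a + n) mod n" by simp
  also have "\<dots> = a + n" using a by (intro mod_pos_pos_trivial) auto
  finally show ?thesis .
qed

lemma dvd_small: "0 < (n::int) \<Longrightarrow> \<bar>d\<bar> < n \<Longrightarrow> n dvd d \<Longrightarrow> d = 0"
proof (rule ccontr)
  assume "0 < n" "\<bar>d\<bar> < n" "n dvd d" "d \<noteq> 0"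
  then have "n dvd \<bar>d\<bar>" by simp
  then have "n \<le> \<bar>d\<bar>" using \<open>d \<noteq> 0\<close> by (intro zdvd_imp_le) auto
  then show False using \<open>\<bar>d\<bar> < n\<close> by simp
qed

lemma r_range: assumes "0 < (n::int)" "\<bar>z\<bar> < 2 * n" "z = n * r" shows "r = -1 \<or> r = 0 \<or> r = 1"
proof -
  have "r \<ge> -1"
  proof (rule ccontr)
    assume "\<not> r \<ge> -1"
    then have "n * r \<le> n * (-2)" using assms(1) by (intro mult_left_mono) auto
    then show False using assms by linarith
  qed
  moreover have "r \<le> 1"
  proof (rule ccontr)
    assume "\<not> r \<le> 1"
    then have "n * 2 \<le> n * r" using assms(1) by (intro mult_left_mono) auto
    then show False using assms by linarith
  qed
  ultimately show ?thesis by auto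
qed

lemma L_gap:
  fixes A :: "nat set"
  assumes "finite A"
  shows "A \<noteq> {} \<Longrightarrow> (\<forall>x\<in>A. \<forall>y\<in>A. x < y \<longrightarrow> x + s \<le> y) \<Longrightarrow> Min A + (card A - 1) * s \<le> Max A"
  using assms
proof (induct A rule: finite_linorder_max_induct)
  case empty
  then show ?case by simp
next
  case (insert b A)
  show ?case
  proof (cases "A = {}")
    case True
    then show ?thesis by simp
  next
    case False
    have IH: "Min A + (card A - 1) * s \<le> Max A" using insert False by auto
    have bA: "b \<notin> A" using insert by auto
    have MaxA: "Max A \<in> A" using insert False by auto
    have "Max A + s \<le> b" using insert(5) MaxA insert(2) by auto
    moreover have "Max A < b" using insert(2) MaxA by auto
    moreover have "Max (insert b A) = b"
    proof -
      have "Max (insert b A) = max b (Max A)" using insert(1) False by simp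
      then show ?thesis using \<open>Max A < b\<close> by simp
    qed
    moreover have "Min (insert b A) = Min A" using insert False
      by (metis Min_insert Min_in less_imp_le min.absorb2)
    moreover have "card (insert b A) = card A + 1" using insert bA by simp
    moreover have "card A \<ge> 1" using False insert by (simp add: Suc_leI card_gt_0_iff)
    ultimately show ?thesis using IH
      by (simp add: algebra_simps)
  qed
qed

context
  fixes k s :: nat and N :: int
  assumes k2: "k \<ge> 2" and s2: "s \<ge> 2" and NE: "N = int k * int s + 1"
begin

lemma N_ge: "N \<ge> 2 * int k + 1"
proof -
  have "int k * int s \<ge> int k * 2" using s2 by (intro mult_left_mono) auto
  then show ?thesis using NE by simp
qed

lemma N_pos: "N > 0" using N_ge by simp

lemma zz_range: "1 \<le> zz N s u \<and> int (zz N s u) \<le> N"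
proof -
  define r where "r = (- int s * u - 1) mod N"
  have "0 \<le> r" "r < N" unfolding r_def using pos_mod_bound[OF N_pos] pos_mod_sign[OF N_pos] by auto
  then have "1 \<le> nat (r + 1) \<and> int (nat (r+1)) \<le> N" by simp
  then show ?thesis unfolding zz_def r_def .
qed

lemma zz_mod: "(w - int k * int (zz N s u)) mod N = (w - u) mod N"
proof -
  define r where "r = (- int s * u - 1) mod N"
  define q where "q = (- int s * u - 1) div N"
  have rq: "r = - int s * u - 1 - N * q" unfolding r_def q_def by (simp add: minus_mult_div_eq_mod)
  have r0: "r \<ge> 0" unfolding r_def using N_pos by simp
  have "int (zz N s u) = r + 1" unfolding zz_def r_def[symmetric] using r0 by simp
  then have "int k * int (zz N s u) = int k * (- int s * u - N * q)" using rq by simp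
  then have "(w - int k * int (zz N s u)) - (w - u) = N * (u + int k * q)"
    using NE by (simp add: algebra_simps)
  then show ?thesis by (simp add: mod_eq_dvd_iff)
qed

lemma cong1: "(x::int) - int s * ((u - int k * x) mod N - u) = N * (x + int s * ((u - int k * x) div N))"
proof -
  have e: "(u - int k * x) mod N = (u - int k * x) - N * ((u - int k * x) div N)"
    by (simp add: minus_mult_div_eq_mod)
  have gen0: "\<And>q. x - int s * ((u - int k * x - N * q) - u) = N * (x + int s * q)"
    unfolding NE by (simp add: algebra_simps)
  have gen: "\<And>a q. a = u - int k * x - N * q \<Longrightarrow> x - int s * (a - u) = N * (x + int s * q)"
    using gen0 by blast
  show ?thesis by (rule gen[OF e])
qed

lemma cong2: "N dvd (int x - int y) - int s * ((u - int k * int x) mod N - (u - int k * int y) mod N)"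
proof -
  have "(int x - int y) - int s * ((u - int k * int x) mod N - (u - int k * int y) mod N)
      = (int x - int s * ((u - int k * int x) mod N - u)) - (int y - int s * ((u - int k * int y) mod N - u))"
    by (simp add: algebra_simps)
  also have "\<dots> = N * ((int x + int s * ((u - int k * int x) div N)) - (int y + int s * ((u - int k * int y) div N)))"
    unfolding cong1 by (simp add: algebra_simps)
  finally show ?thesis by simp
qed

lemma FF_sub: "FF' k N u \<subseteq> {1..nat N}" unfolding FF'_def by auto

lemma FF_fin: "finite (FF' k N u)" using FF_sub finite_subset by blast

lemma FF_inj_h: assumes "x \<in> FF' k N u" "y \<in> FF' k N u"
  "(u - int k * int x) mod N = (u - int k * int y) mod N" shows "x = y"
proof -
  have "N dvd int x - int y" using cong2[of x y u] assms(3) by simp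
  moreover have "\<bar>int x - int y\<bar> < N"
  proof -
    have "int x \<le> N" "int y \<le> N" "1 \<le> int x" "1 \<le> int y" using assms(1,2) unfolding FF'_def by auto
    then show ?thesis by linarith
  qed
  ultimately have "int x - int y = 0" using dvd_small N_pos by blast
  then show ?thesis by simp
qed

lemma FF_card: "card (FF' k N u) = k"
proof -
  define h where "h x = (u - int k * int x) mod N" for x
  have inj: "inj_on h (FF' k N u)" unfolding inj_on_def h_def using FF_inj_h by blast
  have im: "h ` FF' k N u = {0..<int k}"
  proof
    show "h ` FF' k N u \<subseteq> {0..<int k}" unfolding h_def FF'_def using N_pos by auto
  next
    show "{0..<int k} \<subseteq> h ` FF' k N u"
    proof
      fix j assume j: "j \<in> {0..<int k}"
      define x where "x = zz N s (u - j)"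
      have "j < int k" using j by simp
      then have "j < N" using N_ge by linarith
      then have hx: "h x = j" unfolding h_def x_def zz_mod using j by simp
      have "x \<in> FF' k N u" unfolding FF'_def using zz_range[of "u - j"] hx j
        unfolding h_def x_def by auto
      then show "j \<in> h ` FF' k N u" using hx by force
    qed
  qed
  have "card (FF' k N u) = card (h ` FF' k N u)" using inj by (simp add: card_image)
  also have "\<dots> = k" unfolding im by simp
  finally show ?thesis .
qed


lemma FF_zz: "zz N s u \<in> FF' k N u"
proof -
  have "(u - int k * int (zz N s u)) mod N = 0" unfolding zz_mod by simp
  then show ?thesis unfolding FF'_def using zz_range[of u] k2 by auto
qed

lemma FF_mem: "x \<in> FF' k N u \<longleftrightarrow> 1 \<le> x \<and> int x \<le> N \<and> (u - int k * int x) mod N < int k"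
  unfolding FF'_def by simp

lemma FF_stable: assumes "x \<in> FF' k N u" "y \<in> FF' k N u" "x \<noteq> y"
  shows "int s \<le> \<bar>int x - int y\<bar> \<and> \<bar>int x - int y\<bar> \<le> N - int s"
proof -
  define a where "a = (u - int k * int x) mod N"
  define b where "b = (u - int k * int y) mod N"
  have a: "0 \<le> a" "a < int k" using assms(1) unfolding a_def FF_mem using pos_mod_sign[OF N_pos] by auto
  have b: "0 \<le> b" "b < int k" using assms(2) unfolding b_def FF_mem using pos_mod_sign[OF N_pos] by auto
  have ab: "a \<noteq> b" using FF_inj_h[OF assms(1,2)] assms(3) unfolding a_def b_def by blast
  define t where "t = int s * (a - b)"
  have dv: "N dvd (int x - int y) - t" using cong2[of x y u] unfolding t_def a_def b_def .
  then obtain r where r: "(int x - int y) - t = N * r" by (auto elim: dvdE)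
  define d where "d = \<bar>a - b\<bar>"
  have d: "1 \<le> d" "d \<le> int k - 1" using a b ab unfolding d_def by auto
  have tabs: "\<bar>t\<bar> = int s * d" unfolding t_def d_def by (simp add: abs_mult)
  have "int s * 1 \<le> int s * d" using d by (intro mult_left_mono) auto
  moreover have "int s * d \<le> int s * (int k - 1)" using d by (intro mult_left_mono) auto
  ultimately have tb: "int s \<le> \<bar>t\<bar>" "\<bar>t\<bar> \<le> N - 1 - int s" using tabs NE by (auto simp: algebra_simps)
  have xy: "1 \<le> int x" "1 \<le> int y" "int x \<le> N" "int y \<le> N"
  proof -
    show "1 \<le> int x" "1 \<le> int y" "int x \<le> N" "int y \<le> N" using assms(1,2) unfolding FF'_def by auto
  qed
  have tb2: "t \<le> N - 1 - int s" "- (N - 1 - int s) \<le> t" using tb(2) by linarith+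
  have "\<bar>int x - int y - t\<bar> < 2 * N"
  proof -
    have s0: "0 \<le> int s" by simp
    show ?thesis unfolding abs_less_iff using xy tb2 s0 by (intro conjI; linarith)
  qed
  then have "r = -1 \<or> r = 0 \<or> r = 1" using r_range[OF N_pos] r by metis
  then show ?thesis using r tb xy by (auto simp: abs_if split: if_splits)
qed

lemma FF_disj: "FF' k N u \<inter> FF' k N v = {} \<longleftrightarrow> (v - u) mod N \<in> {int k .. N - int k}"
proof
  assume "(v - u) mod N \<in> {int k .. N - int k}"
  then have d: "int k \<le> (v - u) mod N" "(v - u) mod N \<le> N - int k" by auto
  show "FF' k N u \<inter> FF' k N v = {}"
  proof (rule ccontr)
    assume "FF' k N u \<inter> FF' k N v \<noteq> {}"
    then obtain x where x: "x \<in> FF' k N u" "x \<in> FF' k N v" by auto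
    define a where "a = (u - int k * int x) mod N"
    define b where "b = (v - int k * int x) mod N"
    have a: "0 \<le> a" "a < int k" using x(1) unfolding a_def FF_mem using pos_mod_sign[OF N_pos] by auto
    have b: "0 \<le> b" "b < int k" using x(2) unfolding b_def FF_mem using pos_mod_sign[OF N_pos] by auto
    have "(b - a) mod N = ((v - int k * int x) - (u - int k * int x)) mod N"
      unfolding a_def b_def by (simp add: mod_diff_eq)
    also have "\<dots> = (v - u) mod N" by simp
    finally have e: "(b - a) mod N = (v - u) mod N" .
    show False
    proof (cases "b - a \<ge> 0")
      case True
      then have "(b - a) mod N = b - a" using a b N_ge by (intro mod_pos_pos_trivial) linarith+
      then show False using e d a b by linarith
    next
      case False
      then have "(b - a) mod N = b - a + N" using a b N_ge by (intro mod_small_neg) linarith+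
      then show False using e d a b by linarith
    qed
  qed
next
  assume H: "FF' k N u \<inter> FF' k N v = {}"
  define d where "d = (v - u) mod N"
  have d0: "0 \<le> d" "d < N" unfolding d_def using pos_mod_bound[OF N_pos] pos_mod_sign[OF N_pos] by auto
  show "(v - u) mod N \<in> {int k .. N - int k}"
  proof (rule ccontr)
    assume "(v - u) mod N \<notin> {int k .. N - int k}"
    then have "d < int k \<or> d > N - int k" unfolding d_def by auto
    then show False
    proof
      assume dk: "d < int k"
      define x where "x = zz N s u"
      have "x \<in> FF' k N u" unfolding x_def by (rule FF_zz)
      moreover have "x \<in> FF' k N v" unfolding FF_mem x_def zz_mod using zz_range[of u] dk d_def by auto
      ultimately show False using H by auto
    next
      assume dk: "d > N - int k"
      define x where "x = zz N s v"
      have "x \<in> FF' k N v" unfolding x_def by (rule FF_zz)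
      moreover have "(u - v) mod N = N - d"
      proof -
        have "(u - v) mod N = (- (v - u)) mod N" by simp
        also have "\<dots> = (- d) mod N" unfolding d_def by (simp add: mod_minus_eq)
        also have "\<dots> = - d + N" using d0 dk N_ge by (intro mod_small_neg) linarith+
        finally show ?thesis by simp
      qed
      then have "x \<in> FF' k N u" unfolding FF_mem x_def zz_mod using zz_range[of v] dk by auto
      ultimately show False using H by auto
    qed
  qed
qed

lemma FF_inj: assumes "0 \<le> u" "u < N" "0 \<le> v" "v < N" "FF' k N u = FF' k N v" shows "u = v"
proof (rule ccontr)
  assume ne: "u \<noteq> v"
  have "zz N s u \<in> FF' k N v" using FF_zz[of u] assms(5) by simp
  then have h1: "(v - u) mod N < int k" unfolding FF_mem zz_mod by simp
  have "zz N s v \<in> FF' k N u" using FF_zz[of v] assms(5) by simp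
  then have h2: "(u - v) mod N < int k" unfolding FF_mem zz_mod by simp
  show False
  proof (cases "u < v")
    case True
    then have "(v - u) mod N = v - u" using assms by (intro mod_pos_pos_trivial) auto
    moreover have "(u - v) mod N = u - v + N" using assms True by (intro mod_small_neg) auto
    ultimately show False using h1 h2 N_ge by linarith
  next
    case False
    then have "(u - v) mod N = u - v" using assms by (intro mod_pos_pos_trivial) auto
    moreover have "(v - u) mod N = v - u + N" using assms False ne by (intro mod_small_neg) auto
    ultimately show False using h1 h2 N_ge by linarith
  qed
qed


lemma FF_surj: assumes st: "s_stable (k*s+1) s S" and cS: "card S = k"
  shows "\<exists>u. 0 \<le> u \<and> u < N \<and> S = FF' k N u"
proof -
  have Nn: "int (k*s+1) = N" using NE by simp
  have Ssub: "S \<subseteq> {1..k*s+1}" using st unfolding s_stable_def by auto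
  have fin: "finite S" using Ssub finite_subset by blast
  have Sne: "S \<noteq> {}" using cS k2 by auto
  have stab: "\<And>i j. i\<in>S \<Longrightarrow> j\<in>S \<Longrightarrow> i\<noteq>j \<Longrightarrow> int s \<le> \<bar>int i - int j\<bar> \<and> \<bar>int i - int j\<bar> \<le> N - int s"
    using st Nn unfolding s_stable_def by auto
  have gap: "\<And>x y. x\<in>S \<Longrightarrow> y\<in>S \<Longrightarrow> x<y \<Longrightarrow> x + s \<le> y"
  proof -
    fix x y assume "x\<in>S" "y\<in>S" "x<y"
    then have "int s \<le> \<bar>int x - int y\<bar>" using stab[of x y] by auto
    moreover have "\<bar>int x - int y\<bar> = int y - int x" using \<open>x<y\<close> by simp
    ultimately show "x + s \<le> y" by linarith
  qed
  define c where "c x = card {z\<in>S. z < x}" for x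
  define m where "m = Min S"
  define M where "M = Max S"
  have mS: "m \<in> S" unfolding m_def using fin Sne by simp
  have MS: "M \<in> S" unfolding M_def using fin Sne by simp
  have mle: "\<And>x. x\<in>S \<Longrightarrow> m \<le> x" unfolding m_def using fin by simp
  have leM: "\<And>x. x\<in>S \<Longrightarrow> x \<le> M" unfolding M_def using fin by simp
  define e where "e x = int x - int m - int (c x) * int s" for x
  have cle: "card {z\<in>S. z \<le> x} = c x + 1" if "x \<in> S" for x
  proof -
    have "{z\<in>S. z \<le> x} = {z\<in>S. z<x} \<union> {x}" using that by auto
    moreover have "card ({z\<in>S. z<x} \<union> {x}) = c x + 1" unfolding c_def using fin
      by (subst card_Un_disjoint) auto
    ultimately show ?thesis by simp
  qed
  have F2: "\<And>x y. x\<in>S \<Longrightarrow> y\<in>S \<Longrightarrow> y \<le> x \<Longrightarrow> c y \<le> c x \<and> y + (c x - c y) * s \<le> x"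
  proof -
    fix x y assume xS: "x\<in>S" and yS: "y\<in>S" and yx: "y \<le> x"
    define I where "I = {z\<in>S. y \<le> z \<and> z \<le> x}"
    have finI: "finite I" using fin unfolding I_def by auto
    have yI: "y \<in> I" using yS yx unfolding I_def by auto
    have MinI: "Min I = y" using finI yI unfolding I_def by (intro Min_eqI) auto
    have MaxI: "Max I = x" using finI xS yx unfolding I_def by (intro Max_eqI) auto
    have gapI: "\<forall>a\<in>I. \<forall>b\<in>I. a<b \<longrightarrow> a + s \<le> b" using gap unfolding I_def by auto
    have L: "Min I + (card I - 1)*s \<le> Max I" using L_gap[OF finI] yI gapI by auto
    have U: "{z\<in>S. z<x} \<union> {x} = {z\<in>S. z<y} \<union> I" using xS yx unfolding I_def by auto
    have A1: "card ({z\<in>S. z<x} \<union> {x}) = c x + 1" unfolding c_def using fin by (subst card_Un_disjoint) auto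
    have B1: "card ({z\<in>S. z<y} \<union> I) = c y + card I" unfolding c_def using fin finI
      by (subst card_Un_disjoint) (auto simp: I_def)
    have cc: "c x + 1 = c y + card I" using A1 B1 unfolding U by linarith
    have "card I > 0" using finI yI by (auto simp: card_gt_0_iff)
    then have "card I \<ge> 1" by simp
    with cc have "card I - 1 = c x - c y" "c y \<le> c x" by linarith+
    moreover have "y + (card I - 1)*s \<le> x" using L unfolding MinI MaxI .
    ultimately show "c y \<le> c x \<and> y + (c x - c y) * s \<le> x" by simp
  qed
  have emono: "\<And>x y. x\<in>S \<Longrightarrow> y\<in>S \<Longrightarrow> y \<le> x \<Longrightarrow> e y \<le> e x"
  proof -
    fix x y assume "x\<in>S" "y\<in>S" "y\<le>x"
    from F2[OF this] have h: "c y \<le> c x" "y + (c x - c y)*s \<le> x" by auto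
    have "int (y + (c x - c y)*s) \<le> int x" using h(2) by (simp only: of_nat_le_iff)
    then have "int y + int (c x - c y) * int s \<le> int x" by simp
    moreover have "int (c x - c y) = int (c x) - int (c y)" using h(1) by simp
    ultimately have "int y + int (c x) * int s - int (c y) * int s \<le> int x" by (simp add: left_diff_distrib)
    then show "e y \<le> e x" unfolding e_def by linarith
  qed
  have "{z\<in>S. z < m} = {}" using mle by force
  then have cm: "c m = 0" unfolding c_def by simp
  have em: "e m = 0" unfolding e_def cm by simp
  have "{z\<in>S. z < M} = S - {M}" using leM by force
  then have cM: "c M = k - 1" unfolding c_def using fin MS cS by simp
  have mM: "m \<noteq> M"
  proof
    assume "m = M"
    then have "S \<subseteq> {m}" using mle leM by force
    then have "card S \<le> card {m}" by (intro card_mono) auto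
    then have "card S \<le> 1" by simp
    then show False using cS k2 by simp
  qed
  have "\<bar>int M - int m\<bar> \<le> N - int s" using stab[OF MS mS] mM by auto
  moreover have "\<bar>int M - int m\<bar> = int M - int m" using mle[OF MS] by simp
  ultimately have Mm: "int M - int m \<le> N - int s" by simp
  have "int (c M) = int k - 1" using cM k2 by simp
  then have "e M = int M - int m - (int k - 1) * int s" unfolding e_def by simp
  then have "e M = int M - int m - (int k * int s - int s)" by (simp add: algebra_simps)
  then have eM: "e M \<le> 1" using Mm NE by linarith
  have e01: "\<And>x. x\<in>S \<Longrightarrow> e x = 0 \<or> e x = 1"
  proof -
    fix x assume xS: "x\<in>S"
    have "e m \<le> e x" using emono[OF xS mS mle[OF xS]] .
    moreover have "e x \<le> e M" using emono[OF MS xS leM[OF xS]] .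
    ultimately show "e x = 0 \<or> e x = 1" using em eM by linarith
  qed
  define j where "j = card {z\<in>S. e z = 0}"
  have jk: "j \<le> k" unfolding j_def using cS fin by (metis (no_types, lifting) card_mono mem_Collect_eq subsetI)
  define u0 where "u0 = int k * int m + int k - int j"
  define u where "u = u0 mod N"
  have key: "\<And>x. x\<in>S \<Longrightarrow> (u - int k * int x) mod N < int k"
  proof -
    fix x assume xS: "x\<in>S"
    have "{z\<in>S. z<x} \<subset> S" using xS by auto
    then have cxk: "c x < k" unfolding c_def using psubset_card_mono[OF fin] cS by simp
    have xe: "int x = int m + int (c x) * int s + e x" unfolding e_def by simp
    have eq: "u0 - int k * int x = (int k - int j + int (c x) - int k * e x) - N * int (c x)"
      unfolding u0_def xe NE by (simp add: algebra_simps)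
    define v where "v = int k - int j + int (c x) - int k * e x"
    have "(u - int k * int x) mod N = (u0 - int k * int x) mod N" unfolding u_def by (simp add: mod_diff_left_eq)
    also have "\<dots> = v mod N" unfolding eq v_def[symmetric] by (simp add: mod_eq_dvd_iff)
    finally have mv: "(u - int k * int x) mod N = v mod N" .
    have vb: "0 \<le> v \<and> v < int k"
    proof (cases "e x = 0")
      case True
      have sub: "{z\<in>S. z \<le> x} \<subseteq> {z\<in>S. e z = 0}"
      proof
        fix z assume "z \<in> {z\<in>S. z \<le> x}"
        then have zS: "z\<in>S" and zx: "z \<le> x" by auto
        have "e z \<le> e x" using emono[OF xS zS zx] .
        then show "z \<in> {z\<in>S. e z = 0}" using e01[OF zS] True zS by auto
      qed
      have "c x + 1 \<le> j" unfolding j_def cle[OF xS, symmetric] using fin sub by (intro card_mono) auto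
      then show ?thesis unfolding v_def using True jk by simp
    next
      case False
      then have e1: "e x = 1" using e01 xS by auto
      have sub: "{z\<in>S. e z = 0} \<subseteq> {z\<in>S. z<x}"
      proof
        fix z assume "z \<in> {z\<in>S. e z = 0}"
        then have zS: "z\<in>S" and ez: "e z = 0" by auto
        have "z < x"
        proof (rule ccontr)
          assume "\<not> z < x"
          then have "e x \<le> e z" using emono[OF zS xS] by simp
          then show False using e1 ez by simp
        qed
        then show "z \<in> {z\<in>S. z<x}" using zS by auto
      qed
      have "j \<le> c x" unfolding j_def c_def using fin sub by (intro card_mono) auto
      then show ?thesis unfolding v_def using e1 cxk by simp
    qed
    then have "v < N" using N_ge by linarith
    then have "v mod N = v" using vb by (intro mod_pos_pos_trivial) auto
    then show "(u - int k * int x) mod N < int k" using mv vb by simp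
  qed
  have "S \<subseteq> FF' k N u"
  proof
    fix x assume xS: "x \<in> S"
    then have "1 \<le> x" "x \<le> k*s+1" using Ssub by auto
    then have "1 \<le> int x" "int x \<le> N" using Nn by linarith+
    then show "x \<in> FF' k N u" unfolding FF'_def using key[OF xS] by auto
  qed
  then have "S = FF' k N u" using card_subset_eq[OF FF_fin] cS FF_card by simp
  moreover have "0 \<le> u" "u < N" unfolding u_def using pos_mod_bound[OF N_pos] pos_mod_sign[OF N_pos] by auto
  ultimately show ?thesis by blast
qed

end


theorem mainTheorem7:
  fixes s k :: nat
  assumes "s \<ge> 2" and "k \<ge> 2"
  shows "graph_iso
           (cay_Zn_vertices (k * s + 1)) (cay_Zn_adj (k * s + 1) (circ_conn (k * s + 1) k))
           (stab_kneser_vertices (k * s + 1) k s) kneser_adj"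
proof -
  define N where "N = int k * int s + 1"
  have NE: "N = int k * int s + 1" by (simp add: N_def)
  have Nn: "int (k*s+1) = N" unfolding N_def by simp
  note A = assms(2) assms(1) NE
  have V: "cay_Zn_vertices (k*s+1) = {0..<N}" unfolding cay_Zn_vertices_def Nn ..
  have bij: "bij_betw (FF' k N) {0..<N} (stab_kneser_vertices (k*s+1) k s)"
  proof (rule bij_betw_imageI)
    show "inj_on (FF' k N) {0..<N}" unfolding inj_on_def using FF_inj[OF A] by auto
    show "FF' k N ` {0..<N} = stab_kneser_vertices (k*s+1) k s"
    proof
      show "FF' k N ` {0..<N} \<subseteq> stab_kneser_vertices (k*s+1) k s"
      proof
        fix T assume "T \<in> FF' k N ` {0..<N}"
        then obtain u where T: "T = FF' k N u" by auto
        have sub: "T \<subseteq> {1..k*s+1}"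
        proof
          fix x assume "x \<in> T"
          then have "1 \<le> int x" "int x \<le> N" unfolding T FF'_def by auto
          then have "1 \<le> x" "x \<le> k*s+1" using Nn by linarith+
          then show "x \<in> {1..k*s+1}" by simp
        qed
        have "s_stable (k*s+1) s T" unfolding s_stable_def Nn
          using sub FF_stable[OF A] T by auto
        moreover have "card T = k" unfolding T by (rule FF_card[OF A])
        ultimately show "T \<in> stab_kneser_vertices (k*s+1) k s" unfolding stab_kneser_vertices_def by simp
      qed
    next
      show "stab_kneser_vertices (k*s+1) k s \<subseteq> FF' k N ` {0..<N}"
      proof
        fix T assume "T \<in> stab_kneser_vertices (k*s+1) k s"
        then have "s_stable (k*s+1) s T" "card T = k" unfolding stab_kneser_vertices_def by auto
        then obtain u where "0 \<le> u" "u < N" "T = FF' k N u" using FF_surj[OF A] by blast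
        then show "T \<in> FF' k N ` {0..<N}" by auto
      qed
    qed
  qed
  have adj: "\<forall>u\<in>{0..<N}. \<forall>v\<in>{0..<N}. cay_Zn_adj (k*s+1) (circ_conn (k*s+1) k) u v \<longleftrightarrow> kneser_adj (FF' k N u) (FF' k N v)"
    unfolding cay_Zn_adj_def circ_conn_def kneser_adj_def Nn using FF_disj[OF A] by simp
  show ?thesis unfolding graph_iso_def V using bij adj by blast
qed

end
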